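(* Let $\delta>0$ and $\alpha\in(0,2)$. Assume in addition that $V\in C^1(\mathbb R^d)$ with $\sup_{x\in\mathbb R^d}|\nabla V(x)|<\delta$. If there is $C_1>0$ such that for all $f\in C_b^\infty(\mathbb R^d)$, $$\int\big(f(x)-\mu_{2V}(f)\big)^2\mu_{2V}(dx)\le C_1\iint\frac{(f(y)-f(x))^2}{|y-x|^{d+\alpha}}e^{-\delta|y-x|}e^{-V(y)}dy\,e^{-V(x)}dx,$$ then there is $\lambda_0>0$ with $\int e^{\lambda_0|x|}\mu_{2V}(dx)<\infty$.
   Context: Let $d\ge1$. $V:\mathbb R^d\to\mathbb R$ is a locally bounded measurable function such that $e^{-V}$ is bounded and $\int e^{-V(x)}dx<\infty$. $\mu_{2V}(dx):=\frac{e^{-2V(x)}}{\int e^{-2V(y)}dy}dx$, $\mu_{2V}(f)=\int f\,d\mu_{2V}$. $C_b^\infty$ denotes smooth functions bounded with all derivatives. *)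

theory Defs
  imports "HOL-Analysis.Analysis"
begin

definition pderiv_dir :: "'a::euclidean_space \<Rightarrow> ('a \<Rightarrow> real) \<Rightarrow> 'a \<Rightarrow> real" where
  "pderiv_dir v g = (\<lambda>x. frechet_derivative g (at x) v)"

fun iter_pderiv :: "'a::euclidean_space list \<Rightarrow> ('a \<Rightarrow> real) \<Rightarrow> 'a \<Rightarrow> real" where
  "iter_pderiv [] g = g"
| "iter_pderiv (v # vs) g = pderiv_dir v (iter_pderiv vs g)"

definition Cb_inf :: "('a::euclidean_space \<Rightarrow> real) \<Rightarrow> bool" where
  "Cb_inf f \<longleftrightarrow> (\<forall>vs. set vs \<subseteq> Basis \<longrightarrow>
      (\<forall>x. iter_pderiv vs f differentiable (at x)) \<and> bounded (range (iter_pderiv vs f)))"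

definition locally_bounded :: "('a::euclidean_space \<Rightarrow> real) \<Rightarrow> bool" where
  "locally_bounded V \<longleftrightarrow> (\<forall>K. compact K \<longrightarrow> bounded (V ` K))"

definition mu2V :: "('a::euclidean_space \<Rightarrow> real) \<Rightarrow> 'a measure" where
  "mu2V V = density lborel
     (\<lambda>x. ennreal (exp (-2 * V x) / (\<integral>y. exp (-2 * V y) \<partial>lborel)))"

end

theory Submission
  imports Defs "HOL-Computational_Algebra.Polynomial" "HOL-Real_Asymp.Real_Asymp" "HOL-Probability.Probability_Measure"
begin


lemma hd1D:
  fixes G :: "nat \<Rightarrow> real \<Rightarrow> real" and u :: "'a::euclidean_space"
  assumes deriv: "\<And>n t. (G n has_real_derivative G (Suc n) t) (at t)"
  shows "((\<lambda>x. c * G n (u \<bullet> x)) has_derivative (\<lambda>h. c * (G (Suc n) (u \<bullet> x) * (u \<bullet> h)))) (at x)"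
proof -
  have d1: "(G n has_derivative (\<lambda>h. h * G (Suc n) (u \<bullet> x))) (at (u \<bullet> x))"
  proof -
    have e: "(*) (G (Suc n) (u \<bullet> x)) = (\<lambda>h. h * G (Suc n) (u \<bullet> x))" by (rule ext) (simp add: mult.commute)
    show ?thesis using deriv[of n "u \<bullet> x", unfolded has_field_derivative_def] e by metis
  qed
  have d0: "((\<lambda>x. u \<bullet> x) has_derivative (\<lambda>h. u \<bullet> h)) (at x)"
    by (auto intro!: derivative_eq_intros)
  have "((\<lambda>x. G n (u \<bullet> x)) has_derivative (\<lambda>h. (u \<bullet> h) * G (Suc n) (u \<bullet> x))) (at x)"
    using has_derivative_compose[OF d0 d1] by (simp add: o_def)
  then show ?thesis by (auto intro!: derivative_eq_intros simp: mult.commute)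
qed

lemma iter_pderiv_1D:
  fixes G :: "nat \<Rightarrow> real \<Rightarrow> real" and u :: "'a::euclidean_space"
  assumes deriv: "\<And>n t. (G n has_real_derivative G (Suc n) t) (at t)"
  shows "iter_pderiv vs (\<lambda>x. G 0 (u \<bullet> x)) = (\<lambda>x. prod_list (map (\<lambda>v. u \<bullet> v) vs) * G (length vs) (u \<bullet> x))"
proof (induction vs)
  case Nil
  then show ?case by simp
next
  case (Cons v vs)
  define c where "c = prod_list (map (\<lambda>v. u \<bullet> v) vs)"
  define n where "n = length vs"
  have IH: "iter_pderiv vs (\<lambda>x. G 0 (u \<bullet> x)) = (\<lambda>x. c * G n (u \<bullet> x))"
    using Cons by (simp add: c_def n_def)
  show ?case
    using frechet_derivative_at[OF hd1D[of G c n u, OF deriv]]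
    by (simp add: IH pderiv_dir_def c_def n_def fun_eq_iff algebra_simps)
qed

lemma Cb_from_1D:
  fixes G :: "nat \<Rightarrow> real \<Rightarrow> real" and u :: "'a::euclidean_space"
  assumes deriv: "\<And>n t. (G n has_real_derivative G (Suc n) t) (at t)"
    and bdd: "\<And>n. \<exists>B. \<forall>t. \<bar>G n t\<bar> \<le> B"
  shows "Cb_inf (\<lambda>x. G 0 (u \<bullet> x))"
  unfolding Cb_inf_def
proof (intro allI impI conjI)
  fix vs :: "'a list" and x
  define c where "c = prod_list (map (\<lambda>v. u \<bullet> v) vs)"
  define n where "n = length vs"
  note hd1D[of G c n u x, OF deriv]
  then show "iter_pderiv vs (\<lambda>x. G 0 (u \<bullet> x)) differentiable at x"
    unfolding iter_pderiv_1D[of G, OF deriv] c_def n_def differentiable_def by blast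
next
  fix vs :: "'a list"
  obtain B where B: "\<forall>t. \<bar>G (length vs) t\<bar> \<le> B" using bdd by blast
  show "bounded (range (iter_pderiv vs (\<lambda>x. G 0 (u \<bullet> x))))"
    unfolding iter_pderiv_1D[of G, OF deriv] bounded_iff
    by (rule exI[of _ "\<bar>prod_list (map (\<lambda>v. u \<bullet> v) vs)\<bar> * B"])
       (auto simp: abs_mult intro!: mult_left_mono B[rule_format])
qed



definition sig :: "real \<Rightarrow> real" where "sig w = exp w / (1 + exp w)"

lemma sig_bounds: "0 \<le> sig w" "sig w \<le> 1"
  unfolding sig_def by (auto simp: divide_simps add_pos_nonneg)

lemma sig_deriv: "(sig has_real_derivative sig w * (1 - sig w)) (at w)"
proof -
  have h: "1 + exp w \<noteq> 0" by (smt (verit) exp_gt_zero)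
  have "(sig has_real_derivative (exp w * (1 + exp w) - exp w * exp w) / (1 + exp w)^2) (at w)"
    unfolding sig_def
    by (auto intro!: derivative_eq_intros simp: power2_eq_square h)
  moreover have "(exp w * (1 + exp w) - exp w * exp w) / (1 + exp w)^2 = sig w * (1 - sig w)"
    unfolding sig_def using h by (simp add: field_simps power2_eq_square)
  ultimately show ?thesis by simp
qed

fun Pseq :: "real \<Rightarrow> real \<Rightarrow> nat \<Rightarrow> real poly" where
  "Pseq \<epsilon> a 0 = [:0, 1/\<epsilon>:]"
| "Pseq \<epsilon> a (Suc n) = smult a (pderiv (Pseq \<epsilon> a n) * [:0, 1, -1:])"

definition Gseq :: "real \<Rightarrow> real \<Rightarrow> nat \<Rightarrow> real \<Rightarrow> real" where
  "Gseq \<epsilon> a n t = poly (Pseq \<epsilon> a n) (sig (a * t + ln \<epsilon>))"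

lemma Gseq_deriv: "(Gseq \<epsilon> a n has_real_derivative Gseq \<epsilon> a (Suc n) t) (at t)"
proof -
  have ds: "((\<lambda>t. sig (a * t + ln \<epsilon>)) has_real_derivative sig (a * t + ln \<epsilon>) * (1 - sig (a * t + ln \<epsilon>)) * a) (at t)"
  proof -
    have "((\<lambda>t. a * t + ln \<epsilon>) has_real_derivative a) (at t)" by (auto intro!: derivative_eq_intros)
    from DERIV_chain2[OF sig_deriv this] show ?thesis .
  qed
  have "((\<lambda>t. poly (Pseq \<epsilon> a n) (sig (a * t + ln \<epsilon>))) has_real_derivative
      poly (pderiv (Pseq \<epsilon> a n)) (sig (a * t + ln \<epsilon>)) * (sig (a * t + ln \<epsilon>) * (1 - sig (a * t + ln \<epsilon>)) * a)) (at t)"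
    using DERIV_chain2[OF poly_DERIV ds] .
  moreover have "poly (pderiv (Pseq \<epsilon> a n)) (sig (a * t + ln \<epsilon>)) * (sig (a * t + ln \<epsilon>) * (1 - sig (a * t + ln \<epsilon>)) * a)
     = Gseq \<epsilon> a (Suc n) t"
    by (simp add: Gseq_def algebra_simps)
  ultimately show ?thesis unfolding Gseq_def by simp
qed

lemma Gseq_bdd: "\<exists>B. \<forall>t. \<bar>Gseq \<epsilon> a n t\<bar> \<le> B"
proof -
  have "compact ((\<lambda>s. poly (Pseq \<epsilon> a n) s) ` {0..1})"
    by (intro compact_continuous_image continuous_intros) auto
  then obtain B where B: "\<And>y. y \<in> (\<lambda>s. poly (Pseq \<epsilon> a n) s) ` {0..1} \<Longrightarrow> norm y \<le> B"
    using compact_imp_bounded bounded_iff by metis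
  have "\<bar>Gseq \<epsilon> a n t\<bar> \<le> B" for t
  proof -
    have "poly (Pseq \<epsilon> a n) (sig (a * t + ln \<epsilon>)) \<in> (\<lambda>s. poly (Pseq \<epsilon> a n) s) ` {0..1}"
      using sig_bounds by auto
    from B[OF this] show ?thesis by (simp add: Gseq_def)
  qed
  then show ?thesis by blast
qed

lemma Gseq0: "\<epsilon> > 0 \<Longrightarrow> Gseq \<epsilon> a 0 t = exp (a * t) / (1 + \<epsilon> * exp (a * t))"
  by (simp add: Gseq_def sig_def exp_add field_simps)

definition fe :: "real \<Rightarrow> real \<Rightarrow> 'a::euclidean_space \<Rightarrow> 'a \<Rightarrow> real" where
  "fe \<epsilon> a u x = exp (a * (u \<bullet> x)) / (1 + \<epsilon> * exp (a * (u \<bullet> x)))"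

lemma fe_Cb: "\<epsilon> > 0 \<Longrightarrow> Cb_inf (fe \<epsilon> a u)"
proof -
  assume e: "\<epsilon> > 0"
  have "fe \<epsilon> a u = (\<lambda>x. Gseq \<epsilon> a 0 (u \<bullet> x))" using Gseq0[OF e] by (simp add: fe_def fun_eq_iff)
  then show ?thesis using Cb_from_1D[of "Gseq \<epsilon> a" u, OF Gseq_deriv Gseq_bdd] by simp
qed



lemma ennreal_term_le_suminf: "(f::nat \<Rightarrow> ennreal) n \<le> suminf f"
  using sum_le_suminf[OF summableI, of "{n}" f] by simp

lemma nn_suminf_cmult_ind:
  assumes A[measurable]: "\<And>n. A n \<in> sets M"
  shows "(\<integral>\<^sup>+ z. (\<Sum>n. (c n :: ennreal) * indicator (A n) z) \<partial>M) = (\<Sum>n. c n * emeasure M (A n))"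
  apply (subst nn_integral_suminf)
   apply measurable
  apply (intro suminf_cong nn_integral_cmult_indicator A)
  done

lemma meas_suminf_cmult_ind:
  assumes A[measurable]: "\<And>n. A n \<in> sets M"
  shows "(\<lambda>z. \<Sum>n. (c n :: ennreal) * indicator (A n) z) \<in> borel_measurable M"
  by measurable

lemma J0_finite:
  fixes k \<alpha> :: real
  assumes k: "k > 0" and \<alpha>: "0 < \<alpha>" "\<alpha> < 2"
  shows "(\<integral>\<^sup>+ z. ennreal (norm z ^ 2 / norm z powr (real DIM('a) + \<alpha>) * exp (-k * norm z)) \<partial>(lborel::'a::euclidean_space measure)) < \<infinity>"
proof -
  define d where "d = DIM('a)"
  have d1: "d \<ge> 1" unfolding d_def by (simp add: DIM_positive Suc_leI)
  define e where "e = 2 - real d - \<alpha>"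
  define \<gamma> where "\<gamma> = \<bar>e\<bar>"
  have e1: "e \<le> 1" using d1 \<alpha> unfolding e_def by simp
  have \<gamma>d: "\<gamma> < real d" using d1 \<alpha> unfolding \<gamma>_def e_def by auto
  define U where "U = unit_ball_vol (real d)"
  have U0: "U \<ge> 0" unfolding U_def by simp
  define g where "g = (\<lambda>z::'a. ennreal (norm z ^ 2 / norm z powr (real DIM('a) + \<alpha>) * exp (-k * norm z)))"
  define F1 where "F1 = (\<lambda>z::'a. \<Sum>n. ennreal (2 powr ((real n + 1) * \<gamma>)) * indicator (cball 0 (2 powr (- real n))) z)"
  define F2 where "F2 = (\<lambda>z::'a. \<Sum>m. ennreal ((real m + 2) * exp (-k * (real m + 1))) * indicator (cball 0 (real m + 2)) z)"
  have gval: "norm z ^ 2 / norm z powr (real DIM('a) + \<alpha>) = norm z powr e" if "z \<noteq> 0" for z :: 'a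
  proof -
    have "norm z ^ 2 = norm z powr 2" using that powr_realpow[of "norm z" 2] by simp
    then have "norm z ^ 2 / norm z powr (real DIM('a) + \<alpha>) = norm z powr 2 / norm z powr (real DIM('a) + \<alpha>)" by simp
    also have "\<dots> = norm z powr (2 - (real DIM('a) + \<alpha>))" by (rule powr_diff[symmetric])
    also have "2 - (real DIM('a) + \<alpha>) = e" by (simp add: e_def d_def)
    finally show ?thesis .
  qed
  have ptw: "g z \<le> F1 z + F2 z" for z
  proof (cases "z = 0")
    case True then show ?thesis by (simp add: g_def)
  next
    case False
    define r where "r = norm z"
    have r0: "r > 0" using False by (simp add: r_def)
    have gz: "g z = ennreal (r powr e * exp (-k * r))" unfolding g_def r_def by (simp only: gval[OF False])
    show ?thesis
    proof (cases "r \<le> 1")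
      case True
      define L where "L = - log 2 r"
      have L0: "L \<ge> 0" using True r0 unfolding L_def by simp
      define n where "n = nat \<lfloor>L\<rfloor>"
      have nL: "real n \<le> L" "L < real n + 1" using L0 unfolding n_def by linarith+
      have rL: "r = 2 powr (- L)" unfolding L_def using r0 by simp
      have "2 powr (- real n) \<ge> r" unfolding rL using nL by simp
      then have ind: "indicator (cball 0 (2 powr (- real n))) z = (1::ennreal)" by (simp add: r_def)
      have "r powr e = 2 powr (- L * e)" unfolding rL by (simp add: powr_powr)
      also have "\<dots> \<le> 2 powr ((real n + 1) * \<gamma>)"
      proof -
        have "- L * e \<le> L * \<gamma>" using mult_left_mono[of "-e" "\<gamma>" L] L0 unfolding \<gamma>_def by simp
        also have "\<dots> \<le> (real n + 1) * \<gamma>" using nL unfolding \<gamma>_def by (intro mult_right_mono) auto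
        finally show ?thesis by simp
      qed
      finally have pe: "r powr e \<le> 2 powr ((real n + 1) * \<gamma>)" .
      have "exp (-k * r) \<le> 1" using k r0 by simp
      then have "r powr e * exp (-k * r) \<le> r powr e" by (intro mult_left_le) auto
      with pe have "r powr e * exp (-k * r) \<le> 2 powr ((real n + 1) * \<gamma>)" by linarith
      then have "g z \<le> ennreal (2 powr ((real n + 1) * \<gamma>)) * indicator (cball 0 (2 powr (- real n))) z"
        unfolding gz ind by simp
      also have "\<dots> \<le> F1 z" unfolding F1_def
        by (rule ennreal_term_le_suminf)
      finally show ?thesis by (meson add_increasing2 order_trans zero_le)
    next
      case False
      define m where "m = nat \<lfloor>r\<rfloor> - 1"
      have mr: "real m + 1 \<le> r" "r < real m + 2" using False unfolding m_def by linarith+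
      have ind: "indicator (cball 0 (real m + 2)) z = (1::ennreal)" using mr by (simp add: r_def)
      have "r powr e \<le> r powr 1" using False e1 by (intro powr_mono) auto
      then have "r powr e \<le> r" using r0 by simp
      moreover have "exp (-k * r) \<le> exp (-k * (real m + 1))" using mr k by simp
      ultimately have "r powr e * exp (-k * r) \<le> (real m + 2) * exp (-k * (real m + 1))"
        using mr by (intro mult_mono) auto
      then have "g z \<le> ennreal ((real m + 2) * exp (-k * (real m + 1))) * indicator (cball 0 (real m + 2)) z"
        unfolding gz ind by simp
      also have "\<dots> \<le> F2 z" unfolding F2_def
        by (rule ennreal_term_le_suminf)
      finally show ?thesis by (meson add_increasing order_trans zero_le)
    qed
  qed
  have I1: "(\<integral>\<^sup>+ z. F1 z \<partial>lborel) < \<infinity>"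
  proof -
    have "(\<integral>\<^sup>+ z. F1 z \<partial>lborel) = (\<Sum>n. ennreal (2 powr ((real n + 1) * \<gamma>)) * emeasure lborel (cball (0::'a) (2 powr (- real n))))"
      unfolding F1_def
      by (rule nn_suminf_cmult_ind) simp
    also have "\<dots> = (\<Sum>n. ennreal (2 powr \<gamma> * U * (2 powr (\<gamma> - real d)) ^ n))"
    proof (intro suminf_cong)
      fix n
      have "2 powr ((real n + 1) * \<gamma>) * (U * (2 powr (- real n)) ^ d) = 2 powr \<gamma> * U * (2 powr (\<gamma> - real d)) ^ n"
      proof -
        have a: "(2 powr (- real n)) ^ d = 2 powr (real d * (- real n))" by (rule powr_power) simp
        have b: "(2 powr (\<gamma> - real d)) ^ n = 2 powr (real n * (\<gamma> - real d))" by (rule powr_power) simp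
        have c: "(real n + 1) * \<gamma> + real d * (- real n) = \<gamma> + real n * (\<gamma> - real d)" by (simp add: algebra_simps)
        have "2 powr ((real n + 1) * \<gamma>) * (U * (2 powr (- real n)) ^ d) = U * (2 powr ((real n + 1) * \<gamma>) * 2 powr (real d * (- real n)))"
          unfolding a by (simp only: mult_ac)
        also have "\<dots> = U * 2 powr ((real n + 1) * \<gamma> + real d * (- real n))" by (simp only: powr_add)
        also have "\<dots> = U * 2 powr (\<gamma> + real n * (\<gamma> - real d))" by (simp only: c)
        also have "\<dots> = 2 powr \<gamma> * U * (2 powr (\<gamma> - real d)) ^ n" unfolding b by (simp only: powr_add mult_ac)
        finally show ?thesis .
      qed
      then show "ennreal (2 powr ((real n + 1) * \<gamma>)) * emeasure lborel (cball (0::'a) (2 powr (- real n))) = ennreal (2 powr \<gamma> * U * (2 powr (\<gamma> - real d)) ^ n)"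
        by (simp add: emeasure_cball U_def d_def ennreal_mult[symmetric])
    qed
    also have "\<dots> = ennreal (\<Sum>n. 2 powr \<gamma> * U * (2 powr (\<gamma> - real d)) ^ n)"
    proof (rule suminf_ennreal2)
      show "summable (\<lambda>n. 2 powr \<gamma> * U * (2 powr (\<gamma> - real d)) ^ n)"
        using \<gamma>d powr_less_mono[of "\<gamma> - real d" 0 2] by (intro summable_mult summable_geometric) simp
    qed (use U0 in simp)
    finally show ?thesis by simp
  qed
  have I2: "(\<integral>\<^sup>+ z. F2 z \<partial>lborel) < \<infinity>"
  proof -
    define b where "b = (\<lambda>m::nat. (real m + 2) * exp (-k * (real m + 1)) * (U * (real m + 2) ^ d))"
    have "(\<integral>\<^sup>+ z. F2 z \<partial>lborel) = (\<Sum>m. ennreal ((real m + 2) * exp (-k * (real m + 1))) * emeasure lborel (cball (0::'a) (real m + 2)))"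
      unfolding F2_def
      by (rule nn_suminf_cmult_ind) simp
    also have "\<dots> = (\<Sum>m. ennreal (b m))"
      by (intro suminf_cong) (simp add: emeasure_cball U_def d_def ennreal_mult[symmetric] b_def)
    also have "\<dots> = ennreal (\<Sum>m. b m)"
    proof (rule suminf_ennreal2)
      have lim: "(\<lambda>m::nat. (real m + 2) ^ (d+1) * exp (-k*(real m+1)) / exp (-(k/2)) ^ m) \<longlonglongrightarrow> 0"
        using k by real_asymp
      have ev: "eventually (\<lambda>m. norm (b m) \<le> U * exp (-(k/2)) ^ m) sequentially"
      proof -
        from lim have "eventually (\<lambda>m. (real m + 2) ^ (d+1) * exp (-k*(real m+1)) / exp (-(k/2)) ^ m < 1) sequentially"
          by (rule order_tendstoD) simp
        then show ?thesis
        proof eventually_elim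
          case (elim m)
          have pos: "exp (-(k/2)) ^ m > 0" by simp
          have "(real m + 2) ^ (d+1) * exp (-k*(real m+1)) \<le> exp (-(k/2)) ^ m"
            using elim pos by (simp add: divide_less_eq)
          then have "U * ((real m + 2) ^ (d+1) * exp (-k*(real m+1))) \<le> U * exp (-(k/2)) ^ m"
            using U0 by (intro mult_left_mono) auto
          moreover have "b m = U * ((real m + 2) ^ (d+1) * exp (-k*(real m+1)))"
            by (simp add: b_def algebra_simps)
          moreover have "b m \<ge> 0" using U0 by (simp add: b_def)
          ultimately show ?case by simp
        qed
      qed
      show "summable b"
        by (rule summable_comparison_test_ev[OF ev]) (intro summable_mult summable_geometric, simp add: k)
    qed (use U0 in \<open>simp add: b_def\<close>)
    finally show ?thesis by simp
  qed
  have "(\<integral>\<^sup>+ z. g z \<partial>lborel) \<le> (\<integral>\<^sup>+ z. F1 z + F2 z \<partial>lborel)"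
    by (intro nn_integral_mono ptw)
  also have "\<dots> = (\<integral>\<^sup>+ z. F1 z \<partial>lborel) + (\<integral>\<^sup>+ z. F2 z \<partial>lborel)"
  proof (rule nn_integral_add)
    show "F1 \<in> borel_measurable lborel" unfolding F1_def
      by (rule meas_suminf_cmult_ind) simp
    show "F2 \<in> borel_measurable lborel" unfolding F2_def
      by (rule meas_suminf_cmult_ind) simp
  qed
  also have "\<dots> < \<infinity>" using I1 I2 by simp
  finally show ?thesis unfolding g_def .
qed



lemma g_diff_bound:
  fixes X Y \<epsilon> :: real
  assumes X: "X > 0" and Y: "Y > 0" and e: "\<epsilon> > 0"
  shows "\<bar>X / (1 + \<epsilon> * X) - Y / (1 + \<epsilon> * Y)\<bar> \<le> Y / (1 + \<epsilon> * Y) * (max (X / Y) (Y / X) - 1)"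
proof -
  have pX: "1 + \<epsilon> * X > 0" and pY: "1 + \<epsilon> * Y > 0" using X Y e by (auto intro: add_pos_pos)
  have eq: "X / (1 + \<epsilon> * X) - Y / (1 + \<epsilon> * Y) = (X - Y) / ((1 + \<epsilon> * X) * (1 + \<epsilon> * Y))"
    using pX pY by (simp add: field_simps)
  show ?thesis
  proof (cases "X \<ge> Y")
    case True
    have "(X - Y) / ((1 + \<epsilon> * X) * (1 + \<epsilon> * Y)) \<le> (X - Y) / (1 + \<epsilon> * Y)"
    proof -
      have "0 \<le> \<epsilon> * X * (1 + \<epsilon> * Y)" using X e pY by simp
        then have "(1 + \<epsilon> * Y) \<le> (1 + \<epsilon> * X) * (1 + \<epsilon> * Y)" by (simp add: algebra_simps)
      then show ?thesis using True pX pY by (intro divide_left_mono) auto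
    qed
    also have "\<dots> = Y / (1 + \<epsilon> * Y) * (X / Y - 1)"
    proof -
      have h: "Y * (X / Y - 1) = X - Y" using Y by (simp add: field_simps)
      show ?thesis by (simp only: times_divide_eq_left h)
    qed
    also have "\<dots> \<le> Y / (1 + \<epsilon> * Y) * (max (X / Y) (Y / X) - 1)"
      using Y pY by (intro mult_left_mono) auto
    finally show ?thesis unfolding eq using True pX pY by (simp add: abs_of_nonneg)
  next
    case False
    have "(Y - X) / ((1 + \<epsilon> * X) * (1 + \<epsilon> * Y)) \<le> Y / (1 + \<epsilon> * Y) * (Y / X - 1)"
    proof -
      have "(Y - X) / ((1 + \<epsilon> * X) * (1 + \<epsilon> * Y)) \<le> (Y - X) / (1 + \<epsilon> * Y)"
      proof -
        have "0 \<le> \<epsilon> * X * (1 + \<epsilon> * Y)" using X e pY by simp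
        then have "(1 + \<epsilon> * Y) \<le> (1 + \<epsilon> * X) * (1 + \<epsilon> * Y)" by (simp add: algebra_simps)
        then show ?thesis using False pX pY by (intro divide_left_mono) auto
      qed
      also have "\<dots> \<le> (Y / X) * (Y - X) / (1 + \<epsilon> * Y)"
      proof -
        have "1 \<le> Y / X" using False X by simp
        then have "1 * (Y - X) \<le> (Y / X) * (Y - X)" using False by (intro mult_right_mono) auto
        then show ?thesis using pY by (intro divide_right_mono) auto
      qed
      also have "\<dots> = Y / (1 + \<epsilon> * Y) * (Y / X - 1)"
      proof -
        have h: "Y * (Y / X - 1) = Y / X * (Y - X)" using X by (simp add: field_simps)
        show ?thesis by (simp only: times_divide_eq_left h)
      qed
      finally show ?thesis .
    qed
    also have "\<dots> \<le> Y / (1 + \<epsilon> * Y) * (max (X / Y) (Y / X) - 1)"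
      using Y pY by (intro mult_left_mono) auto
    finally show ?thesis unfolding eq using False pX pY
      by (simp add: abs_if divide_less_0_iff minus_divide_left)
  qed
qed

lemma exp_minus_one_le: "(r::real) \<ge> 0 \<Longrightarrow> exp r - 1 \<le> r * exp r"
proof -
  assume r: "r \<ge> 0"
  have "1 - r \<le> exp (-r)" using exp_ge_add_one_self[of "-r"] by simp
  then have "(1 - r) * exp r \<le> exp (-r) * exp r" by (intro mult_right_mono) auto
  then show ?thesis by (simp add: exp_minus field_simps)
qed

lemma fe_diff:
  fixes u x y :: "'a::euclidean_space"
  assumes a: "a \<ge> 0" and e: "\<epsilon> > 0" and u: "norm u = 1"
  defines "g \<equiv> \<lambda>x. exp (a * (u \<bullet> x)) / (1 + \<epsilon> * exp (a * (u \<bullet> x)))"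
  shows "\<bar>g y - g x\<bar> \<le> g x * (a * norm (y - x) * exp (a * norm (y - x)))"
proof -
  define X where "X = exp (a * (u \<bullet> y))"
  define Y where "Y = exp (a * (u \<bullet> x))"
  have X0: "X > 0" and Y0: "Y > 0" by (auto simp: X_def Y_def)
  have st: "\<bar>u \<bullet> y - u \<bullet> x\<bar> \<le> norm (y - x)"
    using Cauchy_Schwarz_ineq2[of u "y - x"] u by (simp add: inner_diff_right)
  have mx: "max (X / Y) (Y / X) = exp (a * \<bar>u \<bullet> y - u \<bullet> x\<bar>)"
  proof -
    have d: "X / Y = exp (a * (u \<bullet> y - u \<bullet> x))" "Y / X = exp (a * (u \<bullet> x - u \<bullet> y))"
      by (simp_all add: X_def Y_def exp_diff[symmetric] algebra_simps)
    show ?thesis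
    proof (cases "u \<bullet> y \<ge> u \<bullet> x")
      case True
      then have "a * (u \<bullet> x - u \<bullet> y) \<le> a * (u \<bullet> y - u \<bullet> x)" using a by (intro mult_left_mono) auto
      then show ?thesis using True unfolding d by (simp add: max_def)
    next
      case False
      then have "a * (u \<bullet> y - u \<bullet> x) \<le> a * (u \<bullet> x - u \<bullet> y)" using a by (intro mult_left_mono) auto
      then show ?thesis using False unfolding d by (simp add: max_def)
    qed
  qed
  have mx2: "max (X / Y) (Y / X) - 1 \<le> a * norm (y - x) * exp (a * norm (y - x))"
  proof -
    have "exp (a * \<bar>u \<bullet> y - u \<bullet> x\<bar>) - 1 \<le> exp (a * norm (y - x)) - 1"
      using st a by (simp add: mult_left_mono)
    also have "\<dots> \<le> a * norm (y - x) * exp (a * norm (y - x))"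
      using a by (intro exp_minus_one_le) simp
    finally show ?thesis unfolding mx .
  qed
  have gx0: "g x \<ge> 0" unfolding g_def using e by (simp add: add_pos_nonneg)
  have "\<bar>g y - g x\<bar> \<le> g x * (max (X / Y) (Y / X) - 1)"
    using g_diff_bound[OF X0 Y0 e] by (simp add: g_def X_def Y_def)
  also have "\<dots> \<le> g x * (a * norm (y - x) * exp (a * norm (y - x)))"
    using gx0 mx2 by (intro mult_left_mono)
  finally show ?thesis .
qed



lemma fe_meas[measurable]: "fe \<epsilon> a u \<in> borel_measurable borel"
  unfolding fe_def by measurable

lemma fe_pos: "\<epsilon> > 0 \<Longrightarrow> fe \<epsilon> a u x > 0"
  unfolding fe_def by (simp add: add_pos_nonneg)

lemma fe_le_inv: "\<epsilon> > 0 \<Longrightarrow> fe \<epsilon> a u x \<le> 1 / \<epsilon>"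
  unfolding fe_def by (simp add: field_simps add_pos_nonneg)

lemma fe_le_exp: "\<epsilon> > 0 \<Longrightarrow> fe \<epsilon> a u x \<le> exp (a * (u \<bullet> x))"
  unfolding fe_def by (simp add: field_simps add_pos_nonneg)

lemma H_meas: "(\<lambda>y::'a::euclidean_space. ennreal (norm (y - x) ^ 2 / norm (y - x) powr (real DIM('a) + \<alpha>) * exp (- k * norm (y - x)))) \<in> borel_measurable borel"
  by measurable

lemma translate_nn:
  fixes H :: "'a::euclidean_space \<Rightarrow> ennreal"
  assumes [measurable]: "H \<in> borel_measurable borel"
  shows "(\<integral>\<^sup>+ y. H (y - x) \<partial>lborel) = (\<integral>\<^sup>+ z. H z \<partial>lborel)"
proof -
  have "(\<integral>\<^sup>+ y. H (y - x) \<partial>lborel) = (\<integral>\<^sup>+ y. H (y - x) \<partial>(distr lborel borel ((+) x)))"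
    by (simp add: lborel_distr_plus)
  also have "\<dots> = (\<integral>\<^sup>+ y. H (x + y - x) \<partial>lborel)"
    by (subst nn_integral_distr) auto
  finally show ?thesis by simp
qed

lemma integrand_bound:
  fixes x y u :: "'a::euclidean_space"
  assumes a: "0 \<le> a" "a \<le> \<kappa> / 4" and \<kappa>: "\<kappa> = \<delta> - c0" and e: "\<epsilon> > 0" and u: "norm u = 1"
    and lipV: "V x \<le> V y + c0 * norm (y - x)"
  shows "(fe \<epsilon> a u y - fe \<epsilon> a u x)\<^sup>2 / norm (y - x) powr (real DIM('a) + \<alpha>) * exp (- \<delta> * norm (y - x)) * exp (- V y)
    \<le> (fe \<epsilon> a u x)\<^sup>2 * a\<^sup>2 * exp (- V x) * (norm (y - x) ^ 2 / norm (y - x) powr (real DIM('a) + \<alpha>) * exp (- (\<kappa>/2) * norm (y - x)))"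
proof -
  define r where "r = norm (y - x)"
  define q where "q = r powr (real DIM('a) + \<alpha>)"
  define D where "D = fe \<epsilon> a u y - fe \<epsilon> a u x"
  define F where "F = fe \<epsilon> a u x"
  have r0: "r \<ge> 0" and q0: "q \<ge> 0" by (auto simp: r_def q_def)
  have F0: "F \<ge> 0" using fe_pos[OF e, of a u x] by (simp add: F_def)
  have h1: "\<bar>D\<bar> \<le> F * (a * r * exp (a * r))"
    using fe_diff[OF a(1) e u, of y x] unfolding D_def F_def r_def fe_def .
  have h2: "D\<^sup>2 \<le> F\<^sup>2 * a\<^sup>2 * r\<^sup>2 * exp (2 * a * r)"
  proof -
    have "D\<^sup>2 = \<bar>D\<bar>\<^sup>2" by simp
    also have "\<dots> \<le> (F * (a * r * exp (a * r)))\<^sup>2" by (intro power_mono h1) simp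
    also have "\<dots> = F\<^sup>2 * a\<^sup>2 * r\<^sup>2 * (exp (a * r))\<^sup>2" by (simp add: power_mult_distrib)
    also have "(exp (a * r))\<^sup>2 = exp (2 * a * r)" by (simp add: power2_eq_square exp_add[symmetric])
    finally show ?thesis .
  qed
  have h3: "exp (- V y) \<le> exp (- V x) * exp (c0 * r)"
  proof -
    have "- V y \<le> - V x + c0 * r" using lipV unfolding r_def by linarith
    then show ?thesis by (metis exp_add exp_le_cancel_iff)
  qed
  have h4: "exp (2 * a * r) * exp (- \<delta> * r) * exp (c0 * r) \<le> exp (- (\<kappa>/2) * r)"
  proof -
    have "2 * a * r + - \<delta> * r + c0 * r \<le> - (\<kappa>/2) * r"
    proof -
      have "(2 * a - \<kappa>) * r \<le> (- (\<kappa>/2)) * r" using a r0 by (intro mult_right_mono) auto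
      then show ?thesis unfolding \<kappa> by (simp add: algebra_simps)
    qed
    then show ?thesis by (simp add: exp_add[symmetric])
  qed
  have "D\<^sup>2 * exp (- \<delta> * r) * exp (- V y) \<le> (F\<^sup>2 * a\<^sup>2 * r\<^sup>2 * exp (2 * a * r)) * exp (- \<delta> * r) * (exp (- V x) * exp (c0 * r))"
    using h2 h3 by (intro mult_mono) auto
  also have "\<dots> = F\<^sup>2 * a\<^sup>2 * exp (- V x) * r\<^sup>2 * (exp (2 * a * r) * exp (- \<delta> * r) * exp (c0 * r))"
    by (simp add: algebra_simps)
  also have "\<dots> \<le> F\<^sup>2 * a\<^sup>2 * exp (- V x) * r\<^sup>2 * exp (- (\<kappa>/2) * r)"
    using h4 F0 by (intro mult_left_mono) auto
  finally have main: "D\<^sup>2 * exp (- \<delta> * r) * exp (- V y) \<le> F\<^sup>2 * a\<^sup>2 * exp (- V x) * r\<^sup>2 * exp (- (\<kappa>/2) * r)" .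
  have "D\<^sup>2 / q * exp (- \<delta> * r) * exp (- V y) = (D\<^sup>2 * exp (- \<delta> * r) * exp (- V y)) / q" by simp
  also have "\<dots> \<le> (F\<^sup>2 * a\<^sup>2 * exp (- V x) * r\<^sup>2 * exp (- (\<kappa>/2) * r)) / q"
    using main q0 by (rule divide_right_mono)
  also have "\<dots> = F\<^sup>2 * a\<^sup>2 * exp (- V x) * (r\<^sup>2 / q * exp (- (\<kappa>/2) * r))" by simp
  finally show ?thesis unfolding D_def F_def r_def q_def .
qed

theorem proposition5p3:
  fixes V :: "'a::euclidean_space \<Rightarrow> real"
    and gradV :: "'a \<Rightarrow> 'a"
    and \<delta> \<alpha> C\<^sub>1 :: real
  assumes V_meas: "V \<in> borel_measurable borel"
    and V_locbdd: "locally_bounded V"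
    and expV_bdd: "bounded (range (\<lambda>x. exp (- V x)))"
    and expV_int: "integrable lborel (\<lambda>x. exp (- V x))"
    and delta_pos: "\<delta> > 0"
    and alpha: "0 < \<alpha>" "\<alpha> < 2"
    and V_grad: "\<And>x. (V has_derivative (\<lambda>h. gradV x \<bullet> h)) (at x)"
    and V_C1: "continuous_on UNIV gradV"
    and grad_sup: "\<exists>c < \<delta>. \<forall>x. norm (gradV x) \<le> c"
    and C1_pos: "C\<^sub>1 > 0"
    and poincare: "\<And>f. Cb_inf f \<Longrightarrow>
        ennreal (\<integral>x. (f x - (\<integral>y. f y \<partial>mu2V V))\<^sup>2 \<partial>mu2V V)
        \<le> ennreal C\<^sub>1 * (\<integral>\<^sup>+x. (\<integral>\<^sup>+y. ennreal ((f y - f x)\<^sup>2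
              / norm (y - x) powr (real DIM('a) + \<alpha>)
              * exp (- \<delta> * norm (y - x)) * exp (- V y)) \<partial>lborel)
              * ennreal (exp (- V x)) \<partial>lborel)"
  shows "\<exists>l\<^sub>0 > 0. (\<integral>\<^sup>+x. ennreal (exp (l\<^sub>0 * norm x)) \<partial>mu2V V) < \<infinity>"
proof -
  obtain c0 where c0: "c0 < \<delta>" "\<And>x. norm (gradV x) \<le> c0" using grad_sup by blast
  have c00: "c0 \<ge> 0" using c0(2)[of 0] norm_ge_zero order_trans by blast
  define \<kappa> where "\<kappa> = \<delta> - c0"
  have \<kappa>0: "\<kappa> > 0" using c0 by (simp add: \<kappa>_def)
  have lip: "V x \<le> V y + c0 * norm (y - x)" for x y
  proof -
    have "norm (V x - V y) \<le> c0 * norm (x - y)"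
    proof (rule differentiable_bound[of UNIV V "\<lambda>x h. gradV x \<bullet> h" c0 x y])
      show "(V has_derivative (\<lambda>h. gradV z \<bullet> h)) (at z within UNIV)" for z using V_grad by simp
      show "onorm (\<lambda>h. gradV z \<bullet> h) \<le> c0" for z
      proof (rule onorm_bound)
        show "0 \<le> c0" by fact
        fix h
        have "\<bar>gradV z \<bullet> h\<bar> \<le> norm (gradV z) * norm h" by (rule Cauchy_Schwarz_ineq2)
        also have "\<dots> \<le> c0 * norm h" by (intro mult_right_mono c0(2)) simp
        finally show "norm (gradV z \<bullet> h) \<le> c0 * norm h" by simp
      qed
    qed auto
    then show ?thesis by (simp add: norm_minus_commute)
  qed
  have V_meas'[measurable]: "V \<in> borel_measurable lborel" using V_meas by simp
  obtain Mb where Mb: "\<And>x. exp (- V x) \<le> Mb" using expV_bdd unfolding bounded_iff by auto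
  define Z where "Z = (\<integral>x. exp (-2 * V x) \<partial>lborel)"
  have int2: "integrable lborel (\<lambda>x. exp (-2 * V x))"
  proof (rule Bochner_Integration.integrable_bound[OF integrable_mult_left[OF expV_int, of Mb]])
    show "(\<lambda>x. exp (-2 * V x)) \<in> borel_measurable lborel" by measurable
    show "AE x in lborel. norm (exp (-2 * V x)) \<le> norm (exp (- V x) * Mb)"
    proof (rule AE_I2)
      fix x
      have "exp (-2 * V x) = exp (- V x) * exp (- V x)" by (simp add: exp_add[symmetric])
      also have "\<dots> \<le> exp (- V x) * Mb" using Mb by (intro mult_left_mono) auto
      finally show "norm (exp (-2 * V x)) \<le> norm (exp (- V x) * Mb)" by simp
    qed
  qed
  have Z0: "Z > 0"
  proof -
    have "Z \<ge> 0" unfolding Z_def by (intro integral_nonneg_AE) auto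
    moreover have "Z \<noteq> 0"
    proof
      assume "Z = 0"
      then have "AE x in lborel. exp (-2 * V x) = 0"
        using integral_nonneg_eq_0_iff_AE[OF int2] unfolding Z_def by auto
      then have "AE x in (lborel::'a measure). False" by simp
      then obtain N :: "'a set" where N: "UNIV \<subseteq> N" "emeasure lborel N = 0" "N \<in> sets lborel"
        by (auto elim!: AE_E)
      then have "emeasure lborel (UNIV :: 'a set) \<le> emeasure lborel N" by (intro emeasure_mono) auto
      then show False using N by simp
    qed
    ultimately show ?thesis by simp
  qed
  define \<mu> where "\<mu> = mu2V V"
  have \<mu>_eq: "\<mu> = density lborel (\<lambda>x. ennreal (exp (-2 * V x) / Z))"
    unfolding \<mu>_def mu2V_def Z_def ..
  have sets_\<mu>[simp, measurable_cong]: "sets \<mu> = sets borel" unfolding \<mu>_eq by simp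
  have space_\<mu>[simp]: "space \<mu> = UNIV" unfolding \<mu>_eq by simp
  have prob: "prob_space \<mu>"
  proof (rule prob_spaceI)
    have "emeasure \<mu> (space \<mu>) = (\<integral>\<^sup>+ x. ennreal (exp (-2 * V x) / Z) \<partial>lborel)"
      unfolding \<mu>_eq by (subst emeasure_density) auto
    also have "\<dots> = ennreal (\<integral>x. exp (-2 * V x) / Z \<partial>lborel)"
      by (rule nn_integral_eq_integral) (use int2 Z0 in auto)
    also have "\<dots> = 1" using Z0 by (simp add: Z_def)
    finally show "emeasure \<mu> (space \<mu>) = 1" .
  qed
  interpret P: prob_space \<mu> by (rule prob)
  have int_bdd: "integrable \<mu> g" if "g \<in> borel_measurable borel" "\<And>x. \<bar>g x\<bar> \<le> B" for g :: "'a \<Rightarrow> real" and B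
    by (rule P.integrable_const_bound[where B=B]) (use that in auto)
  have dens: "(\<integral>\<^sup>+ x. ennreal (g x * exp (-2 * V x)) \<partial>lborel) = ennreal (Z * (\<integral>x. g x \<partial>\<mu>))"
    if g[measurable]: "g \<in> borel_measurable borel" and g0: "\<And>x. 0 \<le> g x" and gB: "\<And>x. g x \<le> B" for g :: "'a \<Rightarrow> real" and B
  proof -
    have ig: "integrable \<mu> g" using g0 gB by (intro int_bdd[OF g, of B]) (simp add: abs_of_nonneg)
    have "(\<integral>\<^sup>+ x. ennreal (g x) \<partial>\<mu>) = ennreal (\<integral>x. g x \<partial>\<mu>)"
      by (rule nn_integral_eq_integral[OF ig]) (simp add: g0)
    moreover have "(\<integral>\<^sup>+ x. ennreal (g x) \<partial>\<mu>) = (\<integral>\<^sup>+ x. ennreal (exp (-2 * V x) / Z) * ennreal (g x) \<partial>lborel)"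
      unfolding \<mu>_eq by (rule nn_integral_density) auto
    moreover have "(\<integral>\<^sup>+ x. ennreal (g x * exp (-2 * V x)) \<partial>lborel) = (\<integral>\<^sup>+ x. ennreal Z * (ennreal (exp (-2 * V x) / Z) * ennreal (g x)) \<partial>lborel)"
    proof (rule nn_integral_cong)
      fix x
      have "g x * exp (-2 * V x) = Z * (exp (-2 * V x) / Z * g x)" using Z0 by simp
      then show "ennreal (g x * exp (-2 * V x)) = ennreal Z * (ennreal (exp (-2 * V x) / Z) * ennreal (g x))"
        using Z0 g0[of x] by (simp add: ennreal_mult[symmetric] del: ennreal_mult)
    qed
    moreover have "(\<integral>\<^sup>+ x. ennreal Z * (ennreal (exp (-2 * V x) / Z) * ennreal (g x)) \<partial>lborel) = ennreal Z * (\<integral>\<^sup>+ x. ennreal (exp (-2 * V x) / Z) * ennreal (g x) \<partial>lborel)"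
      by (rule nn_integral_cmult) measurable
    moreover have "(\<integral>x. g x \<partial>\<mu>) \<ge> 0" by (intro integral_nonneg_AE) (simp add: g0)
    ultimately show ?thesis using Z0 by (simp add: ennreal_mult)
  qed
  define Hf where "Hf = (\<lambda>z::'a. ennreal (norm z ^ 2 / norm z powr (real DIM('a) + \<alpha>) * exp (- (\<kappa>/2) * norm z)))"
  have Hf_meas[measurable]: "Hf \<in> borel_measurable borel" unfolding Hf_def by measurable
  have "integral\<^sup>N lborel Hf < \<infinity>" unfolding Hf_def using J0_finite[of "\<kappa>/2" \<alpha>] \<kappa>0 alpha by simp
  then obtain Jr where Jr: "integral\<^sup>N lborel Hf = ennreal Jr" "Jr \<ge> 0" by (auto simp: less_top_ennreal)
  define a where "a = min (\<kappa>/4) (1 / sqrt (2 * C\<^sub>1 * Jr * Z + 1))"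
  have X1: "2 * C\<^sub>1 * Jr * Z + 1 \<ge> 1" using C1_pos Jr Z0 by simp
  have a0: "a > 0" unfolding a_def using \<kappa>0 X1 by simp
  have a1: "a \<le> \<kappa>/4" unfolding a_def by simp
  have \<theta>: "C\<^sub>1 * Jr * a\<^sup>2 * Z \<le> 1/2"
  proof -
    define X where "X = 2 * C\<^sub>1 * Jr * Z + 1"
    have "a \<le> 1 / sqrt X" unfolding a_def X_def by simp
    then have "a\<^sup>2 \<le> (1 / sqrt X)\<^sup>2" using a0 by (intro power_mono) auto
    also have "\<dots> = 1 / X" using X1 by (simp add: X_def power_divide)
    finally have "a\<^sup>2 \<le> 1 / X" .
    then have "(C\<^sub>1 * Jr * Z) * a\<^sup>2 \<le> (C\<^sub>1 * Jr * Z) * (1 / X)" using C1_pos Jr Z0 by (intro mult_left_mono) auto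
    also have "\<dots> \<le> 1/2"
    proof -
      have W0: "0 \<le> C\<^sub>1 * Jr * Z" using C1_pos Jr Z0 by simp
      have Xp: "X > 0" using X1 unfolding X_def by simp
      have "(C\<^sub>1 * Jr * Z) \<le> 1/2 * X" unfolding X_def by simp
      then show ?thesis using Xp by (simp add: pos_divide_le_eq)
    qed
    finally show ?thesis by (simp add: algebra_simps)
  qed
  have var_bound: "(\<integral>x. (fe \<epsilon> a u x)\<^sup>2 \<partial>\<mu>) \<le> 2 * (\<integral>x. fe \<epsilon> a u x \<partial>\<mu>)\<^sup>2"
    if u: "norm u = 1" and e: "\<epsilon> > 0" for u \<epsilon>
  proof -
    define f where "f = fe \<epsilon> a u"
    have f_meas[measurable]: "f \<in> borel_measurable borel" unfolding f_def by simp
    have f0: "0 < f x" for x unfolding f_def using fe_pos[OF e] by auto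
    have fB: "f x \<le> 1/\<epsilon>" for x unfolding f_def using fe_le_inv[OF e] by auto
    have f2B: "(f x)\<^sup>2 \<le> (1/\<epsilon>)\<^sup>2" for x using f0[of x] fB[of x] by (intro power_mono) auto
    have intf: "integrable \<mu> f" by (rule int_bdd[OF f_meas, of "1/\<epsilon>"]) (use f0 fB in \<open>simp add: abs_of_pos\<close>)
    have intf2: "integrable \<mu> (\<lambda>x. (f x)\<^sup>2)" by (rule int_bdd[of _ "(1/\<epsilon>)\<^sup>2"]) (use f2B in auto)
    define Q where "Q = (\<integral>x. (f x)\<^sup>2 \<partial>\<mu>)"
    define m where "m = (\<integral>x. f x \<partial>\<mu>)"
    have Q0: "Q \<ge> 0" unfolding Q_def by (intro integral_nonneg_AE) auto
    have var: "(\<integral>x. (f x - m)\<^sup>2 \<partial>\<mu>) = Q - m\<^sup>2"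
    proof -
      have "(\<integral>x. (f x - m)\<^sup>2 \<partial>\<mu>) = (\<integral>x. ((f x)\<^sup>2 - 2 * m * f x) + m\<^sup>2 \<partial>\<mu>)"
        by (simp add: power2_diff algebra_simps)
      also have "\<dots> = (\<integral>x. (f x)\<^sup>2 - 2 * m * f x \<partial>\<mu>) + m\<^sup>2"
        using intf intf2 P.prob_space by (subst Bochner_Integration.integral_add) auto
      also have "(\<integral>x. (f x)\<^sup>2 - 2 * m * f x \<partial>\<mu>) = Q - 2 * m * m"
        using intf intf2 by (subst Bochner_Integration.integral_diff) (auto simp: Q_def m_def)
      finally show ?thesis by (simp add: power2_eq_square)
    qed
    have PI: "ennreal (\<integral>x. (f x - m)\<^sup>2 \<partial>\<mu>) \<le> ennreal C\<^sub>1 * (\<integral>\<^sup>+x. (\<integral>\<^sup>+y. ennreal ((f y - f x)\<^sup>2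
              / norm (y - x) powr (real DIM('a) + \<alpha>)
              * exp (- \<delta> * norm (y - x)) * exp (- V y)) \<partial>lborel)
              * ennreal (exp (- V x)) \<partial>lborel)"
      using poincare[OF fe_Cb[OF e, of a u]] unfolding f_def m_def \<mu>_def .
    have inner: "(\<integral>\<^sup>+y. ennreal ((f y - f x)\<^sup>2 / norm (y - x) powr (real DIM('a) + \<alpha>)
              * exp (- \<delta> * norm (y - x)) * exp (- V y)) \<partial>lborel)
        \<le> ennreal ((f x)\<^sup>2 * a\<^sup>2 * exp (- V x)) * ennreal Jr" for x
    proof -
      have "(\<integral>\<^sup>+y. ennreal ((f y - f x)\<^sup>2 / norm (y - x) powr (real DIM('a) + \<alpha>)
              * exp (- \<delta> * norm (y - x)) * exp (- V y)) \<partial>lborel)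
          \<le> (\<integral>\<^sup>+y. ennreal ((f x)\<^sup>2 * a\<^sup>2 * exp (- V x)) * Hf (y - x) \<partial>lborel)"
      proof (rule nn_integral_mono)
        fix y
        have ib: "(f y - f x)\<^sup>2 / norm (y - x) powr (real DIM('a) + \<alpha>) * exp (- \<delta> * norm (y - x)) * exp (- V y)
          \<le> (f x)\<^sup>2 * a\<^sup>2 * exp (- V x) * (norm (y - x) ^ 2 / norm (y - x) powr (real DIM('a) + \<alpha>) * exp (- (\<kappa>/2) * norm (y - x)))"
          using integrand_bound[OF less_imp_le[OF a0] a1 \<kappa>_def e u lip[of x y]] unfolding f_def .
        have "ennreal ((f y - f x)\<^sup>2 / norm (y - x) powr (real DIM('a) + \<alpha>) * exp (- \<delta> * norm (y - x)) * exp (- V y))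
          \<le> ennreal ((f x)\<^sup>2 * a\<^sup>2 * exp (- V x) * (norm (y - x) ^ 2 / norm (y - x) powr (real DIM('a) + \<alpha>) * exp (- (\<kappa>/2) * norm (y - x))))"
          using ib by (rule ennreal_leI)
        also have "\<dots> = ennreal ((f x)\<^sup>2 * a\<^sup>2 * exp (- V x)) * Hf (y - x)"
          unfolding Hf_def by (rule ennreal_mult) auto
        finally show "ennreal ((f y - f x)\<^sup>2 / norm (y - x) powr (real DIM('a) + \<alpha>) * exp (- \<delta> * norm (y - x)) * exp (- V y))
          \<le> ennreal ((f x)\<^sup>2 * a\<^sup>2 * exp (- V x)) * Hf (y - x)" .
      qed
      also have "\<dots> = ennreal ((f x)\<^sup>2 * a\<^sup>2 * exp (- V x)) * (\<integral>\<^sup>+y. Hf (y - x) \<partial>lborel)"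
        by (rule nn_integral_cmult) measurable
      also have "(\<integral>\<^sup>+y. Hf (y - x) \<partial>lborel) = ennreal Jr"
        using translate_nn[OF Hf_meas, of x] Jr by simp
      finally show ?thesis .
    qed
    have "(\<integral>\<^sup>+x. (\<integral>\<^sup>+y. ennreal ((f y - f x)\<^sup>2
              / norm (y - x) powr (real DIM('a) + \<alpha>)
              * exp (- \<delta> * norm (y - x)) * exp (- V y)) \<partial>lborel)
              * ennreal (exp (- V x)) \<partial>lborel)
        \<le> (\<integral>\<^sup>+x. ennreal (Jr * a\<^sup>2) * ennreal ((f x)\<^sup>2 * exp (-2 * V x)) \<partial>lborel)"
    proof (rule nn_integral_mono)
      fix x
      have "(\<integral>\<^sup>+y. ennreal ((f y - f x)\<^sup>2 / norm (y - x) powr (real DIM('a) + \<alpha>)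
              * exp (- \<delta> * norm (y - x)) * exp (- V y)) \<partial>lborel) * ennreal (exp (- V x))
          \<le> (ennreal ((f x)\<^sup>2 * a\<^sup>2 * exp (- V x)) * ennreal Jr) * ennreal (exp (- V x))"
        by (rule mult_right_mono[OF inner]) simp
      also have "\<dots> = ennreal (Jr * a\<^sup>2) * ennreal ((f x)\<^sup>2 * exp (-2 * V x))"
      proof -
        have "(f x)\<^sup>2 * a\<^sup>2 * exp (- V x) * Jr * exp (- V x) = Jr * a\<^sup>2 * ((f x)\<^sup>2 * exp (-2 * V x))"
          by (simp add: exp_add[symmetric] algebra_simps)
        then show ?thesis using Jr by (simp add: ennreal_mult[symmetric] del: ennreal_mult)
      qed
      finally show "(\<integral>\<^sup>+y. ennreal ((f y - f x)\<^sup>2 / norm (y - x) powr (real DIM('a) + \<alpha>)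
              * exp (- \<delta> * norm (y - x)) * exp (- V y)) \<partial>lborel) * ennreal (exp (- V x))
          \<le> ennreal (Jr * a\<^sup>2) * ennreal ((f x)\<^sup>2 * exp (-2 * V x))" .
    qed
    also have "\<dots> = ennreal (Jr * a\<^sup>2) * (\<integral>\<^sup>+x. ennreal ((f x)\<^sup>2 * exp (-2 * V x)) \<partial>lborel)"
      by (rule nn_integral_cmult) measurable
    also have "(\<integral>\<^sup>+x. ennreal ((f x)\<^sup>2 * exp (-2 * V x)) \<partial>lborel) = ennreal (Z * Q)"
      unfolding Q_def by (rule dens[of "\<lambda>x. (f x)\<^sup>2" "(1/\<epsilon>)\<^sup>2"]) (use f2B in auto)
    finally have "ennreal C\<^sub>1 * (\<integral>\<^sup>+x. (\<integral>\<^sup>+y. ennreal ((f y - f x)\<^sup>2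
              / norm (y - x) powr (real DIM('a) + \<alpha>)
              * exp (- \<delta> * norm (y - x)) * exp (- V y)) \<partial>lborel)
              * ennreal (exp (- V x)) \<partial>lborel) \<le> ennreal C\<^sub>1 * (ennreal (Jr * a\<^sup>2) * ennreal (Z * Q))"
      by (rule mult_left_mono) simp
    also have "\<dots> = ennreal (C\<^sub>1 * (Jr * a\<^sup>2 * (Z * Q)))"
      using C1_pos Jr Z0 Q0 by (simp add: ennreal_mult[symmetric] del: ennreal_mult)
    finally have "ennreal (Q - m\<^sup>2) \<le> ennreal (C\<^sub>1 * (Jr * a\<^sup>2 * (Z * Q)))" using PI var by simp
    then have "Q - m\<^sup>2 \<le> C\<^sub>1 * (Jr * a\<^sup>2 * (Z * Q))"
      using C1_pos Jr Z0 Q0 by (subst (asm) ennreal_le_iff) auto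
    also have "\<dots> = (C\<^sub>1 * Jr * a\<^sup>2 * Z) * Q" by (simp add: algebra_simps)
    also have "\<dots> \<le> 1/2 * Q" using \<theta> Q0 by (intro mult_right_mono) auto
    finally have "Q \<le> 2 * m\<^sup>2" by simp
    then show ?thesis unfolding Q_def m_def f_def .
  qed
  have fin_u: "(\<integral>\<^sup>+ x. ennreal (exp (2 * a * (u \<bullet> x))) \<partial>\<mu>) < \<infinity>" if u: "norm u = 1" for u
  proof -
    define A where "A n = {x::'a. u \<bullet> x > real n}" for n
    have A_sets: "range A \<subseteq> sets \<mu>" unfolding A_def by auto
    have dec: "decseq A" unfolding A_def decseq_def by auto
    have inter: "(\<Inter>n. A n) = {}"
    proof -
      have "x \<notin> (\<Inter>n. A n)" for x
      proof -
        obtain n where "u \<bullet> x < real n" using reals_Archimedean2 by blast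
        then show ?thesis unfolding A_def by (auto intro!: exI[of _ n])
      qed
      then show ?thesis by blast
    qed
    have "(\<lambda>n. P.prob (A n)) \<longlonglongrightarrow> 0" using P.finite_Lim_measure_decseq[OF A_sets dec] inter by simp
    then have "eventually (\<lambda>n. P.prob (A n) < 1/16) sequentially" by (rule order_tendstoD) simp
    then obtain N where N: "P.prob (A N) < 1/16" by (auto simp: eventually_sequentially)
    define S where "S = A N"
    define R where "R = real N"
    define K where "K = exp (a * R)"
    have S_sets[measurable]: "S \<in> sets borel" unfolding S_def A_def by measurable
    have K0: "K > 0" unfolding K_def by simp
    have bound: "(\<integral>x. (fe \<epsilon> a u x)\<^sup>2 \<partial>\<mu>) \<le> 11 * K\<^sup>2" if e: "\<epsilon> > 0" for \<epsilon>
    proof -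
      define f where "f = fe \<epsilon> a u"
      have f_meas[measurable]: "f \<in> borel_measurable borel" unfolding f_def by simp
      have f0: "0 < f x" for x unfolding f_def using fe_pos[OF e] by auto
      have fB: "f x \<le> 1/\<epsilon>" for x unfolding f_def using fe_le_inv[OF e] by auto
      have f2B: "(f x)\<^sup>2 \<le> (1/\<epsilon>)\<^sup>2" for x using f0[of x] fB[of x] by (intro power_mono) auto
      have intf: "integrable \<mu> f" by (rule int_bdd[OF f_meas, of "1/\<epsilon>"]) (use f0 fB in \<open>simp add: abs_of_pos\<close>)
      have intf2: "integrable \<mu> (\<lambda>x. (f x)\<^sup>2)" by (rule int_bdd[of _ "(1/\<epsilon>)\<^sup>2"]) (use f2B in auto)
      define Q where "Q = (\<integral>x. (f x)\<^sup>2 \<partial>\<mu>)"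
      define m where "m = (\<integral>x. f x \<partial>\<mu>)"
      define p where "p = P.prob S"
      have p: "p < 1/16" "p \<ge> 0" using N unfolding p_def S_def by auto
      have m0: "m \<ge> 0" unfolding m_def using f0 by (intro integral_nonneg_AE) (auto intro: less_imp_le)
      have Q2: "Q \<le> 2 * m\<^sup>2" using var_bound[OF u e] unfolding Q_def m_def f_def .
      have mle: "m \<le> K + (t/2) * Q + p / (2*t)" if t: "t > 0" for t
      proof -
        have pt: "f x \<le> K + (t/2) * (f x)\<^sup>2 + indicator S x / (2*t)" for x
        proof (cases "x \<in> S")
          case True
          have "0 \<le> (t * f x - 1)\<^sup>2 / (2*t)" using t by simp
          also have "(t * f x - 1)\<^sup>2 / (2*t) = (t/2) * (f x)\<^sup>2 - f x + 1 / (2*t)"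
            using t by (simp add: field_simps power2_eq_square)
          finally show ?thesis using True K0 by simp
        next
          case False
          then have "u \<bullet> x \<le> R" unfolding S_def A_def R_def by auto
          then have "a * (u \<bullet> x) \<le> a * R" using a0 by (intro mult_left_mono) auto
          then have "exp (a * (u \<bullet> x)) \<le> K" unfolding K_def by simp
          moreover have "f x \<le> exp (a * (u \<bullet> x))" unfolding f_def by (rule fe_le_exp[OF e])
          moreover have "0 \<le> (t/2) * (f x)\<^sup>2" using t by simp
          ultimately show ?thesis using False by simp
        qed
        have iS: "integrable \<mu> (indicator S :: 'a \<Rightarrow> real)" by (intro integrable_real_indicator) (auto simp: less_top[symmetric] P.emeasure_finite)
        have "m \<le> (\<integral>x. K + (t/2) * (f x)\<^sup>2 + indicator S x / (2*t) \<partial>\<mu>)"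
          unfolding m_def using intf intf2 iS by (intro integral_mono pt) auto
        also have "\<dots> = K + (t/2) * Q + p / (2*t)"
          using intf2 iS P.prob_space by (simp add: Q_def p_def)
        finally show ?thesis .
      qed
      have "Q \<le> 11 * K\<^sup>2"
      proof (cases "m = 0")
        case True
        have h0: "0 \<le> 11 * K\<^sup>2" by simp
        have "Q \<le> 0" using Q2 True by simp
        then show ?thesis using h0 by linarith
      next
        case False
        then have mp: "m > 0" using m0 by simp
        have h: "m \<le> K + (1/(2*m)/2) * Q + p / (2*(1/(2*m)))" using mle[of "1/(2*m)"] mp by simp
        have h1: "(1/(2*m)/2) * Q \<le> m / 2"
        proof -
          have "(1/(2*m)/2) * Q \<le> (1/(2*m)/2) * (2 * m\<^sup>2)" using Q2 mp by (intro mult_left_mono) auto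
          also have "\<dots> = m / 2" using mp by (simp add: field_simps power2_eq_square)
          finally show ?thesis .
        qed
        have h2: "p / (2*(1/(2*m))) \<le> m / 16"
        proof -
          have "p / (2*(1/(2*m))) = p * m" using mp by simp
          also have "\<dots> \<le> 1/16 * m" using p mp by (intro mult_right_mono) auto
          finally show ?thesis by simp
        qed
        have "m \<le> 16 * K / 7" using h h1 h2 by linarith
        then have "m\<^sup>2 \<le> (16 * K / 7)\<^sup>2" using m0 by (intro power_mono) auto
        then have "Q \<le> 2 * (16 * K / 7)\<^sup>2" using Q2 by linarith
        also have "\<dots> \<le> 11 * K\<^sup>2" by (simp add: power2_eq_square)
        finally show ?thesis .
      qed
      then show ?thesis unfolding Q_def f_def .
    qed
    define fn where "fn n = fe (inverse (real (Suc n))) a u" for n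
    have fn_meas[measurable]: "fn n \<in> borel_measurable borel" for n unfolding fn_def by simp
    have lim: "(\<lambda>n. ennreal ((fn n x)\<^sup>2)) \<longlonglongrightarrow> ennreal (exp (2 * a * (u \<bullet> x)))" for x
    proof -
      have "(\<lambda>n. fn n x) \<longlonglongrightarrow> exp (a * (u \<bullet> x)) / (1 + 0 * exp (a * (u \<bullet> x)))"
        unfolding fn_def fe_def by (intro tendsto_intros LIMSEQ_inverse_real_of_nat) auto
      then have "(\<lambda>n. (fn n x)\<^sup>2) \<longlonglongrightarrow> (exp (a * (u \<bullet> x)))\<^sup>2" by (intro tendsto_intros) simp
      moreover have "(exp (a * (u \<bullet> x)))\<^sup>2 = exp (2 * a * (u \<bullet> x))" by (simp add: power2_eq_square exp_add[symmetric])
      ultimately show ?thesis by (intro tendsto_ennrealI) simp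
    qed
    have "(\<integral>\<^sup>+ x. ennreal (exp (2 * a * (u \<bullet> x))) \<partial>\<mu>) = (\<integral>\<^sup>+ x. liminf (\<lambda>n. ennreal ((fn n x)\<^sup>2)) \<partial>\<mu>)"
      by (intro nn_integral_cong) (simp add: lim_imp_Liminf[OF _ lim])
    also have "\<dots> \<le> liminf (\<lambda>n. \<integral>\<^sup>+ x. ennreal ((fn n x)\<^sup>2) \<partial>\<mu>)"
      by (rule nn_integral_liminf) measurable
    also have "\<dots> \<le> ennreal (11 * K\<^sup>2)"
    proof (rule Liminf_le)
      show "eventually (\<lambda>n. (\<integral>\<^sup>+ x. ennreal ((fn n x)\<^sup>2) \<partial>\<mu>) \<le> ennreal (11 * K\<^sup>2)) sequentially"
      proof (rule always_eventually, rule allI)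
        fix n
        have e: "inverse (real (Suc n)) > 0" by simp
        have f0: "0 < fn n x" for x unfolding fn_def using fe_pos[OF e] by auto
        have fB: "fn n x \<le> 1 / inverse (real (Suc n))" for x unfolding fn_def using fe_le_inv[OF e] by auto
        have f2B: "(fn n x)\<^sup>2 \<le> (1 / inverse (real (Suc n)))\<^sup>2" for x using f0[of x] fB[of x] by (intro power_mono) auto
        have intf2: "integrable \<mu> (\<lambda>x. (fn n x)\<^sup>2)" by (rule int_bdd[of _ "(1 / inverse (real (Suc n)))\<^sup>2"]) (use f2B in auto)
        have "(\<integral>\<^sup>+ x. ennreal ((fn n x)\<^sup>2) \<partial>\<mu>) = ennreal (\<integral>x. (fn n x)\<^sup>2 \<partial>\<mu>)"
          by (rule nn_integral_eq_integral[OF intf2]) simp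
        also have "\<dots> \<le> ennreal (11 * K\<^sup>2)" using bound[OF e] unfolding fn_def by (rule ennreal_leI)
        finally show "(\<integral>\<^sup>+ x. ennreal ((fn n x)\<^sup>2) \<partial>\<mu>) \<le> ennreal (11 * K\<^sup>2)" .
      qed
    qed simp
    finally show ?thesis by (simp add: order_le_less_trans)
  qed
  define l where "l = 2 * a / real DIM('a)"
  have l0: "l > 0" using a0 by (simp add: l_def)
  define E where "E = (\<lambda>(b::'a) (x::'a). ennreal (exp (2 * a * (b \<bullet> x))) + ennreal (exp (2 * a * ((- b) \<bullet> x))))"
  have pt: "ennreal (exp (l * norm x)) \<le> (\<Sum>b\<in>Basis. E b x)" for x :: 'a
  proof -
    define Mx where "Mx = Max ((\<lambda>c. \<bar>x \<bullet> c\<bar>) ` Basis)"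
    have "Mx \<in> (\<lambda>c. \<bar>x \<bullet> c\<bar>) ` Basis" unfolding Mx_def by (intro Max_in) auto
    then obtain b where b: "b \<in> Basis" "Mx = \<bar>x \<bullet> b\<bar>" by auto
    have bmax: "\<bar>x \<bullet> c\<bar> \<le> \<bar>x \<bullet> b\<bar>" if "c \<in> Basis" for c
      using that b unfolding Mx_def by (metis Max_ge finite_Basis finite_imageI imageI)
    have "norm x \<le> (\<Sum>c\<in>Basis. \<bar>x \<bullet> c\<bar>)" by (rule norm_le_l1)
    also have "\<dots> \<le> (\<Sum>c::'a\<in>Basis. \<bar>x \<bullet> b\<bar>)" by (rule sum_mono) (rule bmax)
    also have "\<dots> = real DIM('a) * \<bar>x \<bullet> b\<bar>" by simp
    finally have "l * norm x \<le> l * (real DIM('a) * \<bar>x \<bullet> b\<bar>)" using l0 by (intro mult_left_mono) auto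
    also have "\<dots> = 2 * a * \<bar>x \<bullet> b\<bar>" by (simp add: l_def)
    finally have le1: "exp (l * norm x) \<le> exp (2 * a * \<bar>x \<bullet> b\<bar>)" by simp
    have le2: "exp (2 * a * \<bar>x \<bullet> b\<bar>) \<le> exp (2 * a * (b \<bullet> x)) + exp (2 * a * ((- b) \<bullet> x))"
      by (cases "x \<bullet> b \<ge> 0") (auto simp: inner_commute add_increasing add_increasing2)
    have le3: "exp (l * norm x) \<le> exp (2 * a * (b \<bullet> x)) + exp (2 * a * ((- b) \<bullet> x))"
      using order_trans[OF le1 le2] .
    have "ennreal (exp (l * norm x)) \<le> ennreal (exp (2 * a * (b \<bullet> x)) + exp (2 * a * ((- b) \<bullet> x)))"
      by (rule ennreal_leI[OF le3])
    also have "\<dots> = E b x" unfolding E_def by (rule ennreal_plus) auto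
    also have "\<dots> \<le> (\<Sum>b\<in>Basis. E b x)" by (rule member_le_sum) (use b in auto)
    finally show ?thesis .
  qed
  show ?thesis
  proof (intro exI conjI)
    show "l > 0" by (rule l0)
    have "(\<integral>\<^sup>+ x. ennreal (exp (l * norm x)) \<partial>mu2V V) \<le> (\<integral>\<^sup>+ x. (\<Sum>b\<in>Basis. E b x) \<partial>\<mu>)"
      unfolding \<mu>_def by (intro nn_integral_mono pt)
    also have "\<dots> = (\<Sum>b\<in>Basis. \<integral>\<^sup>+ x. E b x \<partial>\<mu>)"
      by (rule nn_integral_sum) (simp add: E_def)
    also have "\<dots> < \<infinity>"
    proof -
      have "(\<integral>\<^sup>+ x. E b x \<partial>\<mu>) < \<infinity>" if b: "b \<in> Basis" for b
      proof -
        have "(\<integral>\<^sup>+ x. E b x \<partial>\<mu>) = (\<integral>\<^sup>+ x. ennreal (exp (2 * a * (b \<bullet> x))) \<partial>\<mu>) + (\<integral>\<^sup>+ x. ennreal (exp (2 * a * ((- b) \<bullet> x))) \<partial>\<mu>)"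
          unfolding E_def by (rule nn_integral_add) auto
        also have "\<dots> < \<infinity>" using fin_u[of b] fin_u[of "- b"] b by simp
        finally show ?thesis .
      qed
      then show ?thesis by (simp add: less_top[symmetric])
    qed
    finally show "(\<integral>\<^sup>+ x. ennreal (exp (l * norm x)) \<partial>mu2V V) < \<infinity>" .
  qed
qed


end
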